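(* Let $w$ satisfy (A1), fix $\delta\in(0,1/2)$, and suppose (A2) holds: $a_\delta(x)\ge \int_0^1 \widetilde w_\delta(x,y)\,dy$ for all $x\in\Omega$. If $\phi\in L^2(\Omega)$ satisfies $\widetilde{\mathcal P}_\delta\phi\ge 0$ a.e. in $\Omega$, then $\phi\ge 0$ a.e. in $\Omega$.
   Context: Throughout, $\Omega=(0,1)$, $\delta\in(0,1/2)$ is the nonlocal horizon, and $\chi_A$ denotes the indicator function of a set $A$. A function $w:[0,\infty)\to[0,\infty)$ satisfies (A1) if $w$ is continuous and nonincreasing on $[0,1)$, positive on $(0,1)$, $w(r)=0$ for $r\ge 1$, and $\int_{\mathbb R} w(|z|)|z|^2\,dz=2$. Set $w_\delta(x,y)=\delta^{-3}w(|x-y|/\delta)$, $a_\delta(x)=\int_0^1 w_\delta(x,y)\,dy$, and $b_\delta(x)=\frac{2}{(x+\delta)^2}\int_{x-\delta}^{0}(x-y)w_\delta(x,y)\,dy$ for $x\in(0,\delta)$, $b_\delta(x)=\frac{2}{(1-x+\delta)^2}\int_{1}^{x+\delta}(y-x)w_\delta(x,y)\,dy$ for $x\in(1-\delta,1)$, and $b_\delta(x)=0$ otherwise. Define $\widetilde w_\delta(x,y)=|w_\delta(x,y)-b_\delta(x)\chi_{(0,\delta)}(|y-x|)|$ and the comparison operator $\widetilde{\mathcal P}_\delta u(x)=a_\delta(x)u(x)-\int_0^1 u(y)\widetilde w_\delta(x,y)\,dy$ on $L^2(\Omega)$. *)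

theory Defs
  imports "HOL-Analysis.Analysis"
begin

definition A1 :: "(real \<Rightarrow> real) \<Rightarrow> bool" where
  "A1 w \<longleftrightarrow>
     (\<forall>r\<ge>0. w r \<ge> 0) \<and>
     continuous_on {0..<1} w \<and>
     (\<forall>r s. 0 \<le> r \<longrightarrow> r \<le> s \<longrightarrow> s < 1 \<longrightarrow> w s \<le> w r) \<and>
     (\<forall>r. 0 < r \<and> r < 1 \<longrightarrow> w r > 0) \<and>
     (\<forall>r\<ge>1. w r = 0) \<and>
     has_bochner_integral lborel (\<lambda>z. w \<bar>z\<bar> * \<bar>z\<bar>^2) 2"

definition w_delta :: "(real \<Rightarrow> real) \<Rightarrow> real \<Rightarrow> real \<Rightarrow> real \<Rightarrow> real" where
  "w_delta w \<delta> x y = w (\<bar>x - y\<bar> / \<delta>) / \<delta>^3"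

definition a_delta :: "(real \<Rightarrow> real) \<Rightarrow> real \<Rightarrow> real \<Rightarrow> real" where
  "a_delta w \<delta> x = set_lebesgue_integral lborel {0..1} (\<lambda>y. w_delta w \<delta> x y)"

definition b_delta :: "(real \<Rightarrow> real) \<Rightarrow> real \<Rightarrow> real \<Rightarrow> real" where
  "b_delta w \<delta> x =
     (if 0 < x \<and> x < \<delta> then
        2 / (x + \<delta>)^2 * set_lebesgue_integral lborel {x - \<delta>..0} (\<lambda>y. (x - y) * w_delta w \<delta> x y)
      else if 1 - \<delta> < x \<and> x < 1 then
        2 / (1 - x + \<delta>)^2 * set_lebesgue_integral lborel {1..x + \<delta>} (\<lambda>y. (y - x) * w_delta w \<delta> x y)
      else 0)"

definition wt_delta :: "(real \<Rightarrow> real) \<Rightarrow> real \<Rightarrow> real \<Rightarrow> real \<Rightarrow> real" where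
  "wt_delta w \<delta> x y =
     \<bar>w_delta w \<delta> x y - b_delta w \<delta> x * indicator {0<..<\<delta>} \<bar>y - x\<bar>\<bar>"

definition Pt_delta :: "(real \<Rightarrow> real) \<Rightarrow> real \<Rightarrow> (real \<Rightarrow> real) \<Rightarrow> real \<Rightarrow> real" where
  "Pt_delta w \<delta> u x =
     a_delta w \<delta> x * u x - set_lebesgue_integral lebesgue {0..1} (\<lambda>y. u y * wt_delta w \<delta> x y)"

definition L2_Omega :: "(real \<Rightarrow> real) \<Rightarrow> bool" where
  "L2_Omega u \<longleftrightarrow> set_borel_measurable lebesgue {0<..<1} u \<and>
     set_integrable lebesgue {0<..<1} (\<lambda>x. (u x)^2)"

end

theory Submission
  imports Defs
begin

lemma param_cont:
  fixes k :: "real \<Rightarrow> 'a \<Rightarrow> real"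
  assumes meas: "\<And>x. x \<in> S \<Longrightarrow> k x \<in> borel_measurable M"
    and G: "integrable M G"
    and bnd: "\<And>x y. x \<in> S \<Longrightarrow> y \<in> space M \<Longrightarrow> \<bar>k x y\<bar> \<le> G y"
    and cont: "\<And>x0. x0 \<in> S \<Longrightarrow> AE y in M. continuous (at x0 within S) (\<lambda>x. k x y)"
  shows "continuous_on S (\<lambda>x. integral\<^sup>L M (k x))"
proof (rule continuous_on_sequentiallyI)
  fix u a assume u: "\<forall>n. u n \<in> S" and a: "a \<in> S" and lim: "u \<longlonglongrightarrow> a"
  show "(\<lambda>n. integral\<^sup>L M (k (u n))) \<longlonglongrightarrow> integral\<^sup>L M (k a)"
  proof (rule integral_dominated_convergence[where w=G])
    show "k a \<in> borel_measurable M" using meas a .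
    show "\<And>i. k (u i) \<in> borel_measurable M" using meas u by auto
    show "integrable M G" by fact
    show "AE y in M. (\<lambda>i. k (u i) y) \<longlonglongrightarrow> k a y"
      using cont[OF a] proof eventually_elim
      case (elim y)
      then show ?case using u lim unfolding continuous_within_sequentially by (auto simp: o_def)
    qed
    show "\<And>i. AE y in M. norm (k (u i) y) \<le> G y"
      using bnd u by auto
  qed
qed



locale setting =
  fixes w :: "real \<Rightarrow> real" and \<delta> :: real
  assumes A1w: "A1 w" and dpos: "0 < \<delta>" and dlt: "\<delta> < 1/2"
begin

lemma w_nonneg: "r \<ge> 0 \<Longrightarrow> w r \<ge> 0" using A1w unfolding A1_def by auto
lemma w_mono: "0 \<le> r \<Longrightarrow> r \<le> s \<Longrightarrow> s < 1 \<Longrightarrow> w s \<le> w r" using A1w unfolding A1_def by auto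
lemma w_pos: "0 < r \<Longrightarrow> r < 1 \<Longrightarrow> w r > 0" using A1w unfolding A1_def by auto
lemma w_zero: "r \<ge> 1 \<Longrightarrow> w r = 0" using A1w unfolding A1_def by auto
lemma w_cont: "continuous_on {0..<1} w" using A1w unfolding A1_def by auto

lemma w_le0: "r \<ge> 0 \<Longrightarrow> w r \<le> w 0"
  using w_mono[of 0 r] w_zero[of r] w_nonneg[of 0] by (cases "r < 1") auto

lemma w0_pos: "w 0 > 0"
  using w_pos[of "1/2"] w_le0[of "1/2"] by auto

lemma w_cont_at: assumes "r \<ge> 0" "r \<noteq> 1" shows "continuous (at r within {0..}) w"
proof (cases "r < 1")
  case True
  have "continuous (at r within {0..<1}) w"
    using w_cont True assms by (simp add: continuous_on_eq_continuous_within)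
  moreover have "at r within {0..} = at r within {0..<1}"
    by (rule at_within_nhd[where S="{..<1}"]) (use True in auto)
  ultimately show ?thesis by simp
next
  case False
  then have r1: "r > 1" using assms by auto
  have "\<forall>\<^sub>F x in at r within {0..}. w x = 0"
    unfolding eventually_at_topological using r1 w_zero
    by (intro exI[of _ "{1<..}"]) auto
  then have "(w \<longlongrightarrow> 0) (at r within {0..})" by (rule tendsto_eventually)
  then show ?thesis using w_zero r1 by (simp add: continuous_within)
qed

definition "W = w 0 / \<delta>^3"
definition "cc = w (1/2) / \<delta>^3"
definition "F r = w (r/\<delta>) / \<delta>^3"

lemma wd_F: "w_delta w \<delta> x y = F \<bar>x-y\<bar>" unfolding w_delta_def F_def ..

lemma F_nonneg: "r \<ge> 0 \<Longrightarrow> F r \<ge> 0" unfolding F_def using dpos w_nonneg by auto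
lemma F_le: "r \<ge> 0 \<Longrightarrow> F r \<le> W" unfolding F_def W_def using dpos w_le0
  by (simp add: divide_right_mono)
lemma F_zero: "r \<ge> \<delta> \<Longrightarrow> F r = 0" unfolding F_def using dpos w_zero by auto
lemma F_pos: "0 \<le> r \<Longrightarrow> r < \<delta> \<Longrightarrow> F r > 0" unfolding F_def using dpos w_pos w0_pos
  by (cases "r = 0") auto
lemma F_ge_cc: "0 \<le> r \<Longrightarrow> r \<le> \<delta>/2 \<Longrightarrow> F r \<ge> cc" unfolding F_def cc_def using dpos w_mono[of "r/\<delta>" "1/2"]
  by (simp add: divide_right_mono field_simps)
lemma F_mono: "0 \<le> r \<Longrightarrow> r \<le> s \<Longrightarrow> F s \<le> F r"
proof (cases "s < \<delta>")
  case True
  assume "0 \<le> r" "r \<le> s"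
  then show ?thesis unfolding F_def using True dpos w_mono[of "r/\<delta>" "s/\<delta>"]
    by (simp add: divide_right_mono field_simps)
next
  case False
  assume "0 \<le> r" "r \<le> s"
  then show ?thesis using False F_zero[of s] F_nonneg[of r] by auto
qed
lemma cc_pos: "cc > 0" unfolding cc_def using w_pos[of "1/2"] dpos by auto
lemma W_pos: "W > 0" unfolding W_def using w0_pos dpos by auto
lemma F0: "F 0 = W" unfolding F_def W_def by simp

lemma w_ind_meas: "(\<lambda>r. indicator {0..<1} r * w r) \<in> borel_measurable borel"
  using borel_measurable_continuous_on_indicator[of "{0..<1}" w] w_cont by simp

lemma wd_meas[measurable]: "(\<lambda>y. w_delta w \<delta> x y) \<in> borel_measurable borel"
proof -
  have "w_delta w \<delta> x y = (\<lambda>r. indicator {0..<1} r * w r) (\<bar>x-y\<bar>/\<delta>) / \<delta>^3" for y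
    using w_zero dpos by (auto simp: w_delta_def indicator_def not_less)
  moreover have "(\<lambda>y. (\<lambda>r. indicator {0..<1} r * w r) (\<bar>x-y\<bar>/\<delta>) / \<delta>^3) \<in> borel_measurable borel"
    using w_ind_meas by measurable
  ultimately show ?thesis by simp
qed

lemma wd_cont: assumes "\<bar>x0 - y\<bar> \<noteq> \<delta>"
  shows "continuous (at x0 within S) (\<lambda>x. w_delta w \<delta> x y)"
proof -
  let ?g = "\<lambda>x. \<bar>x-y\<bar>/\<delta>"
  have g: "continuous (at x0 within S) ?g" by (intro continuous_intros) (use dpos in auto)
  have "?g x0 \<noteq> 1" using assms dpos by auto
  then have "continuous (at (?g x0) within {0..}) w" using w_cont_at dpos by auto
  moreover have "?g ` S \<subseteq> {0..}" using dpos by auto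
  ultimately have "continuous (at (?g x0) within ?g ` S) w" using continuous_within_subset by blast
  with g have "continuous (at x0 within S) (w \<circ> ?g)" by (rule continuous_within_compose)
  then have "continuous (at x0 within S) (\<lambda>x. (w \<circ> ?g) x / \<delta>^3)"
    by (rule continuous_divide[OF _ continuous_const]) (use dpos in auto)
  then show ?thesis unfolding w_delta_def o_def .
qed

end


lemma int_le_gen:
  fixes f g :: "'a \<Rightarrow> real"
  assumes "\<And>y. 0 \<le> f y" "\<And>y. f y \<le> g y" "integrable M g"
  shows "integral\<^sup>L M f \<le> integral\<^sup>L M g"
proof (cases "integrable M f")
  case True then show ?thesis using assms by (intro integral_mono) auto
next
  case False
  then have "integral\<^sup>L M f = 0" by (rule not_integrable_integral_eq)
  moreover have "0 \<le> integral\<^sup>L M g" by (rule Bochner_Integration.integral_nonneg) (metis assms(1,2) order_trans)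
  ultimately show ?thesis by simp
qed

lemma lin_int: fixes a b c :: real assumes "a \<le> b"
  shows "(LINT y:{a..b}|lborel. (c - y)) = (c*b - b^2/2) - (c*a - a^2/2)"
proof -
  have "(LINT y:{a..b}|lborel. (c - y)) = integral\<^sup>L lborel (\<lambda>y. indicator {a..b} y *\<^sub>R (c - y))"
    by (simp add: set_lebesgue_integral_def)
  also have "\<dots> = (c*b - b^2/2) - (c*a - a^2/2)"
  proof (rule integral_FTC_atLeastAtMost[OF assms, where F="\<lambda>y. c*y - y^2/2"])
    fix x
    have "((\<lambda>y. c*y - y^2/2) has_real_derivative (c - x)) (at x)"
      by (auto intro!: derivative_eq_intros)
    then show "((\<lambda>y. c*y - y^2/2) has_vector_derivative (c - x)) (at x within {a..b})"
      by (simp add: has_real_derivative_iff_has_vector_derivative has_vector_derivative_at_within)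
  qed (intro continuous_intros)
  finally show ?thesis .
qed

lemma lin_int2: fixes a b c :: real assumes "a \<le> b"
  shows "(LINT y:{a..b}|lborel. (y - c)) = (b^2/2 - c*b) - (a^2/2 - c*a)"
proof -
  have "(LINT y:{a..b}|lborel. (y - c)) = integral\<^sup>L lborel (\<lambda>y. indicator {a..b} y *\<^sub>R (y - c))"
    by (simp add: set_lebesgue_integral_def)
  also have "\<dots> = (b^2/2 - c*b) - (a^2/2 - c*a)"
  proof (rule integral_FTC_atLeastAtMost[OF assms, where F="\<lambda>y. y^2/2 - c*y"])
    fix x
    have "((\<lambda>y. y^2/2 - c*y) has_real_derivative (x - c)) (at x)"
      by (auto intro!: derivative_eq_intros)
    then show "((\<lambda>y. y^2/2 - c*y) has_vector_derivative (x - c)) (at x within {a..b})"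
      by (simp add: has_real_derivative_iff_has_vector_derivative has_vector_derivative_at_within)
  qed (intro continuous_intros)
  finally show ?thesis .
qed

lemma cont_ev_const: "eventually (\<lambda>x. f x = f x0) (at x0 within S) \<Longrightarrow> continuous (at x0 within S) f"
  by (simp add: continuous_within tendsto_eventually)

lemma const_int: "a \<le> b \<Longrightarrow> (LINT y:{a..b}|lborel. (c::real)) = c * (b - a)"
  by (simp add: set_lebesgue_integral_def)

context setting begin

definition "I1 x = (LINT y:{x-\<delta>..0}|lborel. (x - y) * w_delta w \<delta> x y)"
definition "I2 x = (LINT y:{1..x+\<delta>}|lborel. (y - x) * w_delta w \<delta> x y)"
definition "bh x = 2/(x+\<delta>)^2 * I1 x + 2/(1-x+\<delta>)^2 * I2 x"

lemma int_small_set: fixes a b :: real assumes "b \<le> a"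
  shows "(LINT y:{a..b}|lborel. (f y::real)) = 0"
proof -
  have "AE y in lborel. indicator {a..b} y *\<^sub>R f y = 0"
    using AE_lborel_singleton[of a] by eventually_elim (use assms in \<open>auto simp: indicator_def\<close>)
  then show ?thesis unfolding set_lebesgue_integral_def by (rule integral_eq_zero_AE)
qed

lemma I1_zero: "x \<ge> \<delta> \<Longrightarrow> I1 x = 0" unfolding I1_def by (rule int_small_set) simp
lemma I2_zero: "x \<le> 1 - \<delta> \<Longrightarrow> I2 x = 0" unfolding I2_def by (rule int_small_set) simp

lemma bh_eq: assumes "0 < x" "x < 1" shows "b_delta w \<delta> x = bh x"
proof -
  consider "x < \<delta>" | "1 - \<delta> < x" | "\<delta> \<le> x" "x \<le> 1 - \<delta>" by linarith
  then show ?thesis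
  proof cases
    case 1 then show ?thesis using assms dlt I2_zero[of x] unfolding b_delta_def bh_def I1_def by auto
  next
    case 2 then show ?thesis using assms dlt dpos I1_zero[of x] unfolding b_delta_def bh_def I2_def by auto
  next
    case 3 then show ?thesis using assms dlt dpos I1_zero[of x] I2_zero[of x] unfolding b_delta_def bh_def by auto
  qed
qed

lemma bh_mid: "\<delta> \<le> x \<Longrightarrow> x \<le> 1 - \<delta> \<Longrightarrow> bh x = 0"
  using I1_zero I2_zero unfolding bh_def by auto

lemma wd_nonneg: "0 \<le> w_delta w \<delta> x y" using F_nonneg wd_F by simp
lemma wd_le: "w_delta w \<delta> x y \<le> W" using F_le wd_F by simp

lemma I1_nonneg: "0 \<le> x \<Longrightarrow> 0 \<le> I1 x"
  unfolding I1_def set_lebesgue_integral_def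
  by (rule Bochner_Integration.integral_nonneg) (auto simp: indicator_def intro!: mult_nonneg_nonneg wd_nonneg)

lemma I2_nonneg: "x \<le> 1 \<Longrightarrow> 0 \<le> I2 x"
  unfolding I2_def set_lebesgue_integral_def
  by (rule Bochner_Integration.integral_nonneg) (auto simp: indicator_def intro!: mult_nonneg_nonneg wd_nonneg)

lemma tF_le: "0 \<le> t \<Longrightarrow> 0 \<le> r \<Longrightarrow> t * F r \<le> W * t"
  using mult_left_mono[OF F_le, of r t] by (simp add: mult.commute)

lemma I1_le: assumes "0 \<le> x" "x \<le> \<delta>" shows "I1 x \<le> W * (\<delta>^2 - x^2) / 2"
proof -
  have "I1 x \<le> integral\<^sup>L lborel (\<lambda>y. indicator {x-\<delta>..0} y *\<^sub>R (W * (x - y)))"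
    unfolding I1_def set_lebesgue_integral_def
  proof (rule int_le_gen)
    show "integrable lborel (\<lambda>y. indicator {x-\<delta>..0} y *\<^sub>R (W * (x - y)))"
      using borel_integrable_atLeastAtMost'[of "x-\<delta>" 0 "\<lambda>y. W * (x - y)"]
      by (auto simp: set_integrable_def continuous_on_mult_left continuous_on_diff)
  qed (use assms in \<open>auto simp: indicator_def wd_F intro!: mult_nonneg_nonneg F_nonneg tF_le\<close>)
  also have "\<dots> = integral\<^sup>L lborel (\<lambda>y. W * (indicator {x-\<delta>..0} y *\<^sub>R (x - y)))"
    by (rule Bochner_Integration.integral_cong) (auto simp: algebra_simps)
  also have "\<dots> = W * (LINT y:{x-\<delta>..0}|lborel. (x - y))"
    unfolding set_lebesgue_integral_def by (rule integral_mult_right_zero)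
  also have "\<dots> = W * (\<delta>^2 - x^2) / 2"
    using assms by (subst lin_int) (auto simp: power2_eq_square field_simps)
  finally show ?thesis .
qed

lemma I2_le: assumes "1 - \<delta> \<le> x" "x \<le> 1" shows "I2 x \<le> W * (\<delta>^2 - (1-x)^2) / 2"
proof -
  have "I2 x \<le> integral\<^sup>L lborel (\<lambda>y. indicator {1..x+\<delta>} y *\<^sub>R (W * (y - x)))"
    unfolding I2_def set_lebesgue_integral_def
  proof (rule int_le_gen)
    show "integrable lborel (\<lambda>y. indicator {1..x+\<delta>} y *\<^sub>R (W * (y - x)))"
      using borel_integrable_atLeastAtMost'[of 1 "x+\<delta>" "\<lambda>y. W * (y - x)"]
      by (auto simp: set_integrable_def continuous_on_mult_left continuous_on_diff)
  qed (use assms in \<open>auto simp: indicator_def wd_F intro!: mult_nonneg_nonneg F_nonneg tF_le\<close>)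
  also have "\<dots> = integral\<^sup>L lborel (\<lambda>y. W * (indicator {1..x+\<delta>} y *\<^sub>R (y - x)))"
    by (rule Bochner_Integration.integral_cong) (auto simp: algebra_simps)
  also have "\<dots> = W * (LINT y:{1..x+\<delta>}|lborel. (y - x))"
    unfolding set_lebesgue_integral_def by (rule integral_mult_right_zero)
  also have "\<dots> = W * (\<delta>^2 - (1-x)^2) / 2"
    using assms by (subst lin_int2) (auto simp: power2_eq_square algebra_simps)
  finally show ?thesis .
qed

end


lemma ind_cont1: fixes d c y x0 :: real assumes "y \<noteq> x0 + d"
  shows "continuous (at x0 within S) (\<lambda>x. indicator {x+d..c} y :: real)"
proof (rule cont_ev_const)
  have e: "\<bar>y - (x0 + d)\<bar> > 0" using assms by auto
  show "\<forall>\<^sub>F x in at x0 within S. indicator {x+d..c} y = (indicator {x0+d..c} y :: real)"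
    unfolding eventually_at
    by (rule exI[of _ "\<bar>y - (x0 + d)\<bar>"]) (use e in \<open>auto simp: indicator_def dist_real_def\<close>)
qed

lemma ind_cont2: fixes d c y x0 :: real assumes "y \<noteq> x0 + d"
  shows "continuous (at x0 within S) (\<lambda>x. indicator {c..x+d} y :: real)"
proof (rule cont_ev_const)
  have e: "\<bar>y - (x0 + d)\<bar> > 0" using assms by auto
  show "\<forall>\<^sub>F x in at x0 within S. indicator {c..x+d} y = (indicator {c..x0+d} y :: real)"
    unfolding eventually_at
    by (rule exI[of _ "\<bar>y - (x0 + d)\<bar>"]) (use e in \<open>auto simp: indicator_def dist_real_def\<close>)
qed

lemma ind_cont3: fixes y x0 d :: real assumes "y \<noteq> x0" "\<bar>y - x0\<bar> \<noteq> d"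
  shows "continuous (at x0 within S) (\<lambda>x. indicator {0<..<d} \<bar>y - x\<bar> :: real)"
proof (rule cont_ev_const)
  define e where "e = min \<bar>y - x0\<bar> \<bar>\<bar>y - x0\<bar> - d\<bar>"
  have e: "e > 0" using assms unfolding e_def by auto
  have e1: "e \<le> \<bar>y - x0\<bar>" and e2: "e \<le> \<bar>\<bar>y - x0\<bar> - d\<bar>" unfolding e_def by auto
  have *: "(\<bar>y - x\<bar> \<in> {0<..<d}) = (\<bar>y - x0\<bar> \<in> {0<..<d})" if xe: "\<bar>x - x0\<bar> < e" for x
  proof -
    have t1: "\<bar>y - x\<bar> \<le> \<bar>y - x0\<bar> + \<bar>x - x0\<bar>" and t2: "\<bar>y - x0\<bar> \<le> \<bar>y - x\<bar> + \<bar>x - x0\<bar>" by arith+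
    show ?thesis
    proof (cases "\<bar>y - x0\<bar> < d")
      case True
      then have "e \<le> d - \<bar>y - x0\<bar>" using e2 by simp
      then have "0 < \<bar>y - x\<bar>" "\<bar>y - x\<bar> < d" using t1 t2 xe e1 by linarith+
      then show ?thesis using True assms by simp
    next
      case False
      then have "\<bar>y - x0\<bar> > d" using assms by simp
      then have "e \<le> \<bar>y - x0\<bar> - d" using e2 by simp
      then have "\<bar>y - x\<bar> > d" using t1 t2 xe by linarith
      then show ?thesis using False by simp
    qed
  qed
  show "\<forall>\<^sub>F x in at x0 within S. indicator {0<..<d} \<bar>y - x\<bar> = (indicator {0<..<d} \<bar>y - x0\<bar> :: real)"
    unfolding eventually_at
  proof (rule exI[of _ e], intro conjI ballI impI allI)
    show "e > 0" by (rule e)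
    fix x assume "x \<in> S" "x \<noteq> x0 \<and> dist x x0 < e"
    then have "\<bar>x - x0\<bar> < e" by (simp add: dist_real_def)
    from *[OF this] show "indicator {0<..<d} \<bar>y - x\<bar> = (indicator {0<..<d} \<bar>y - x0\<bar> :: real)"
      unfolding indicator_def by presburger
  qed
qed

context setting begin

lemma bh_nonneg: "0 \<le> x \<Longrightarrow> x \<le> 1 \<Longrightarrow> 0 \<le> bh x"
  unfolding bh_def using I1_nonneg I2_nonneg by auto

lemma frac_aux: "a > 0 \<Longrightarrow> 2/a^2 * (W * (a*b) / 2) = W * b / a"
  by (simp add: power2_eq_square field_simps)

lemma bh_le_left: assumes "0 \<le> x" "x \<le> \<delta>" shows "bh x \<le> W * (\<delta> - x) / (\<delta> + x)"
proof -
  have "I2 x = 0" using assms dlt by (intro I2_zero) auto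
  then have "bh x = 2/(x+\<delta>)^2 * I1 x" unfolding bh_def by simp
  also have "\<dots> \<le> 2/(x+\<delta>)^2 * (W * (\<delta>^2 - x^2) / 2)"
    using I1_le[OF assms] by (intro mult_left_mono) auto
  also have "\<dots> = 2/(\<delta>+x)^2 * (W * ((\<delta>+x)*(\<delta>-x)) / 2)"
    by (simp only: add.commute[of x] power2_eq_square square_diff_square_factored mult.commute[of "\<delta>-x"])
  also have "\<dots> = W * (\<delta> - x) / (\<delta> + x)"
    using assms dpos by (intro frac_aux) auto
  finally show ?thesis .
qed

lemma bh_le_right: assumes "1 - \<delta> \<le> x" "x \<le> 1" shows "bh x \<le> W * (\<delta> - (1 - x)) / (\<delta> + (1 - x))"
proof -
  have "I1 x = 0" using assms dlt by (intro I1_zero) auto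
  then have "bh x = 2/(1-x+\<delta>)^2 * I2 x" unfolding bh_def by simp
  also have "\<dots> \<le> 2/(1-x+\<delta>)^2 * (W * (\<delta>^2 - (1-x)^2) / 2)"
    using I2_le[OF assms] by (intro mult_left_mono) auto
  also have "\<dots> = 2/(\<delta>+(1-x))^2 * (W * ((\<delta>+(1-x))*(\<delta>-(1-x))) / 2)"
    by (simp only: diff_add_eq[symmetric] add.commute[of "1-x"] power2_eq_square square_diff_square_factored mult.commute[of "\<delta>-(1-x)"])
  also have "\<dots> = W * (\<delta> - (1 - x)) / (\<delta> + (1 - x))"
    using assms dpos by (intro frac_aux) auto
  finally show ?thesis .
qed

lemma bh_le_W: assumes "0 \<le> x" "x \<le> 1" shows "bh x \<le> W"
proof -
  consider "x \<le> \<delta>" | "1 - \<delta> \<le> x" | "\<delta> \<le> x" "x \<le> 1 - \<delta>" by linarith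
  then show ?thesis
  proof cases
    case 1
    have "W * (\<delta> - x) / (\<delta> + x) \<le> W" using assms 1 dpos W_pos by (simp add: field_simps)
    then show ?thesis using bh_le_left[OF assms(1) 1] by linarith
  next
    case 2
    have "W * (\<delta> - (1 - x)) / (\<delta> + (1 - x)) \<le> W" using assms 2 dpos W_pos by (simp add: field_simps)
    then show ?thesis using bh_le_right[OF 2 assms(2)] by linarith
  next
    case 3 then show ?thesis using bh_mid W_pos by simp
  qed
qed

lemma bh_lt_W: assumes "0 < x" "x < 1" shows "bh x < W"
proof -
  consider "x \<le> \<delta>" | "1 - \<delta> \<le> x" | "\<delta> \<le> x" "x \<le> 1 - \<delta>" by linarith
  then show ?thesis
  proof cases
    case 1
    have "W * (\<delta> - x) / (\<delta> + x) < W" using assms 1 dpos W_pos by (simp add: field_simps)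
    then show ?thesis using bh_le_left[OF _ 1] assms by linarith
  next
    case 2
    have "W * (\<delta> - (1 - x)) / (\<delta> + (1 - x)) < W" using assms 2 dpos W_pos by (simp add: field_simps)
    then show ?thesis using bh_le_right[OF 2] assms by linarith
  next
    case 3 then show ?thesis using bh_mid W_pos by simp
  qed
qed

end

context setting begin
lemma AE_avoid3: "AE y in lborel. y \<noteq> (a::real) \<and> y \<noteq> b \<and> y \<noteq> c"
  using AE_lborel_singleton[of a] AE_lborel_singleton[of b] AE_lborel_singleton[of c] by eventually_elim auto

lemma I1_cont: "continuous_on {0..1} I1"
proof -
  have "continuous_on {0..1} (\<lambda>x. integral\<^sup>L lborel (\<lambda>y. indicator {x-\<delta>..0} y *\<^sub>R ((x - y) * w_delta w \<delta> x y)))"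
  proof (rule param_cont[where G="\<lambda>y. indicator {-\<delta>..0} y * ((1+\<delta>)*W)"])
    show "integrable lborel (\<lambda>y. indicator {-\<delta>..0} y * ((1+\<delta>)*W))"
      using borel_integrable_atLeastAtMost'[of "-\<delta>" 0 "\<lambda>y. (1+\<delta>)*W"] by (simp add: set_integrable_def)
    fix x assume x: "x \<in> {0..1::real}"
    show "(\<lambda>y. indicator {x-\<delta>..0} y *\<^sub>R ((x - y) * w_delta w \<delta> x y)) \<in> borel_measurable lborel"
      by measurable
    show "\<bar>indicator {x-\<delta>..0} y *\<^sub>R ((x - y) * w_delta w \<delta> x y)\<bar> \<le> indicator {-\<delta>..0} y * ((1+\<delta>)*W)" for y
    proof (cases "y \<in> {x-\<delta>..0}")
      case True
      then have "\<bar>(x - y) * w_delta w \<delta> x y\<bar> \<le> (1+\<delta>) * W"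
        using x wd_nonneg[of x y] wd_le[of x y]
        by (auto simp: abs_mult intro!: mult_mono)
      then show ?thesis using True x by (auto simp: indicator_def)
    qed (use dpos W_pos in \<open>auto simp: indicator_def\<close>)
  next
    fix x0 assume x0: "x0 \<in> {0..1::real}"
    show "AE y in lborel. continuous (at x0 within {0..1}) (\<lambda>x. indicator {x-\<delta>..0} y *\<^sub>R ((x - y) * w_delta w \<delta> x y))"
      using AE_avoid3[of "x0 - \<delta>" "x0 + \<delta>" 0]
    proof eventually_elim
      case (elim y)
      have "\<bar>x0 - y\<bar> \<noteq> \<delta>" using elim by auto
      then have c1: "continuous (at x0 within {0..1}) (\<lambda>x. w_delta w \<delta> x y)" by (rule wd_cont)
      have c2: "continuous (at x0 within {0..1}) (\<lambda>x. indicator {x+(-\<delta>)..0} y :: real)"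
        by (rule ind_cont1) (use elim in auto)
      have "continuous (at x0 within {0..1}) (\<lambda>x. indicator {x+(-\<delta>)..0} y * ((x - y) * w_delta w \<delta> x y))"
        by (intro continuous_mult c1 c2 continuous_diff continuous_ident continuous_const)
      then show ?case by simp
    qed
  qed
  then show ?thesis unfolding I1_def set_lebesgue_integral_def .
qed

end


lemma int_leb: fixes f :: "real \<Rightarrow> real" shows "integrable lborel f \<Longrightarrow> integrable lebesgue f"
  using integrable_completion[of f lborel] borel_measurable_integrable[of lborel f] by blast

context setting begin

lemma I2_cont: "continuous_on {0..1} I2"
proof -
  have "continuous_on {0..1} (\<lambda>x. integral\<^sup>L lborel (\<lambda>y. indicator {1..x+\<delta>} y *\<^sub>R ((y - x) * w_delta w \<delta> x y)))"
  proof (rule param_cont[where G="\<lambda>y. indicator {1..1+\<delta>} y * ((1+\<delta>)*W)"])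
    show "integrable lborel (\<lambda>y. indicator {1..1+\<delta>} y * ((1+\<delta>)*W))"
      using borel_integrable_atLeastAtMost'[of 1 "1+\<delta>" "\<lambda>y. (1+\<delta>)*W"] by (simp add: set_integrable_def)
    fix x assume x: "x \<in> {0..1::real}"
    show "(\<lambda>y. indicator {1..x+\<delta>} y *\<^sub>R ((y - x) * w_delta w \<delta> x y)) \<in> borel_measurable lborel"
      by measurable
    show "\<bar>indicator {1..x+\<delta>} y *\<^sub>R ((y - x) * w_delta w \<delta> x y)\<bar> \<le> indicator {1..1+\<delta>} y * ((1+\<delta>)*W)" for y
    proof (cases "y \<in> {1..x+\<delta>}")
      case True
      then have "\<bar>(y - x) * w_delta w \<delta> x y\<bar> \<le> (1+\<delta>) * W"
        using x wd_nonneg[of x y] wd_le[of x y]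
        by (auto simp: abs_mult intro!: mult_mono)
      then show ?thesis using True x by (auto simp: indicator_def)
    qed (use dpos W_pos in \<open>auto simp: indicator_def\<close>)
  next
    fix x0 assume x0: "x0 \<in> {0..1::real}"
    show "AE y in lborel. continuous (at x0 within {0..1}) (\<lambda>x. indicator {1..x+\<delta>} y *\<^sub>R ((y - x) * w_delta w \<delta> x y))"
      using AE_avoid3[of "x0 - \<delta>" "x0 + \<delta>" 0]
    proof eventually_elim
      case (elim y)
      have "\<bar>x0 - y\<bar> \<noteq> \<delta>" using elim by auto
      then have c1: "continuous (at x0 within {0..1}) (\<lambda>x. w_delta w \<delta> x y)" by (rule wd_cont)
      have c2: "continuous (at x0 within {0..1}) (\<lambda>x. indicator {1..x+\<delta>} y :: real)"
        by (rule ind_cont2) (use elim in auto)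
      have "continuous (at x0 within {0..1}) (\<lambda>x. indicator {1..x+\<delta>} y * ((y - x) * w_delta w \<delta> x y))"
        by (intro continuous_mult c1 c2 continuous_diff continuous_ident continuous_const)
      then show ?case by simp
    qed
  qed
  then show ?thesis unfolding I2_def set_lebesgue_integral_def .
qed

lemma bh_cont: "continuous_on {0..1} bh"
  unfolding bh_def
proof (intro continuous_on_add continuous_on_mult I1_cont I2_cont continuous_on_divide continuous_on_const
         continuous_on_power continuous_on_diff continuous_on_add continuous_on_id)
  show "\<forall>x\<in>{0..1}. (x + \<delta>)^2 \<noteq> 0" using dpos by auto
  show "\<forall>x\<in>{0..1}. (1 - x + \<delta>)^2 \<noteq> 0" using dpos by auto
qed

definition "wh x y = \<bar>w_delta w \<delta> x y - bh x * indicator {0<..<\<delta>} \<bar>y - x\<bar>\<bar>"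

lemma wt_eq: "0 < x \<Longrightarrow> x < 1 \<Longrightarrow> wt_delta w \<delta> x y = wh x y"
  unfolding wt_delta_def wh_def using bh_eq by simp

lemma wh_nonneg: "0 \<le> wh x y" unfolding wh_def by simp
lemma wh_le: assumes "0 \<le> x" "x \<le> 1" shows "wh x y \<le> W"
proof -
  have "0 \<le> bh x * indicator {0<..<\<delta>} \<bar>y - x\<bar>" "bh x * indicator {0<..<\<delta>} \<bar>y - x\<bar> \<le> W"
    using bh_nonneg[OF assms] bh_le_W[OF assms] W_pos by (auto simp: indicator_def)
  then show ?thesis using wd_nonneg[of x y] wd_le[of x y] unfolding wh_def by auto
qed

lemma wh_meas[measurable]: "(\<lambda>y. wh x y) \<in> borel_measurable borel"
  unfolding wh_def by measurable

lemma wh_cont: assumes "y \<noteq> x0" "y \<noteq> x0 - \<delta>" "y \<noteq> x0 + \<delta>"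
  shows "continuous (at x0 within {0..1}) (\<lambda>x. wh x y)"
proof -
  have "\<bar>x0 - y\<bar> \<noteq> \<delta>" using assms by auto
  then have c1: "continuous (at x0 within {0..1}) (\<lambda>x. w_delta w \<delta> x y)" by (rule wd_cont)
  have c2: "continuous (at x0 within {0..1}) (\<lambda>x. indicator {0<..<\<delta>} \<bar>y - x\<bar> :: real)"
    by (rule ind_cont3) (use assms in auto)
  have "x0 \<in> {0..1} \<Longrightarrow> continuous (at x0 within {0..1}) bh"
    using bh_cont by (simp add: continuous_on_eq_continuous_within)
  moreover have "x0 \<notin> {0..1} \<Longrightarrow> continuous (at x0 within {0..1}) bh"
    by (simp add: continuous_within not_in_closure_trivial_limitI)
  ultimately have c3: "continuous (at x0 within {0..1}) bh" by blast
  show ?thesis unfolding wh_def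
    by (rule continuous_rabs[OF continuous_diff[OF c1 continuous_mult[OF c3 c2]]])
qed

lemma Kcont:
  fixes K :: "real \<Rightarrow> real \<Rightarrow> real"
  assumes g: "g \<in> borel_measurable lebesgue" and gB: "\<And>y. \<bar>g y\<bar> \<le> B"
    and Km: "\<And>x. (\<lambda>y. K x y) \<in> borel_measurable borel"
    and KB: "\<And>x y. x \<in> {0..1} \<Longrightarrow> \<bar>K x y\<bar> \<le> W"
    and Kc: "\<And>x0 y. y \<noteq> x0 \<Longrightarrow> y \<noteq> x0 - \<delta> \<Longrightarrow> y \<noteq> x0 + \<delta> \<Longrightarrow> continuous (at x0 within {0..1}) (\<lambda>x. K x y)"
  shows "continuous_on {0..1} (\<lambda>x. LINT y:{0..1}|lebesgue. g y * K x y)"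
  unfolding set_lebesgue_integral_def
proof (rule param_cont[where G="\<lambda>y::real. indicator {0..1} y * (B * W)" and M=lebesgue])
  have ib: "integrable lborel (\<lambda>y::real. indicator {0..1} y * (B * W))"
    by (simp add: integrable_indicator_iff emeasure_lborel_Icc_eq ennreal_less_top)
  show "integrable lebesgue (\<lambda>y::real. indicator {0..1} y * (B * W))"
    by (rule int_leb[OF ib])
  fix x :: real
  have Kx: "(\<lambda>y. K x y) \<in> borel_measurable lebesgue" 
  proof (rule measurable_completion)
    show "(\<lambda>y. K x y) \<in> borel_measurable lborel" using Km[of x] by (simp add: measurable_lborel1)
  qed
  show "(\<lambda>y. indicator {0..1} y *\<^sub>R (g y * K x y)) \<in> borel_measurable lebesgue"
    by (intro borel_measurable_scaleR borel_measurable_indicator borel_measurable_times g Kx) simp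
  assume x: "x \<in> {0..1}"
  show "\<bar>indicator {0..1} y *\<^sub>R (g y * K x y)\<bar> \<le> indicator {0..1} y * (B * W)" for y
  proof (cases "y \<in> {0..1}")
    case True
    have "\<bar>g y * K x y\<bar> \<le> B * W" unfolding abs_mult
      by (rule mult_mono) (use gB[of y] KB[OF x, of y] in auto)
    then show ?thesis using True by simp
  qed simp
next
  fix x0 :: real
  have "AE y in lebesgue. y \<noteq> x0 \<and> y \<noteq> x0 - \<delta> \<and> y \<noteq> x0 + \<delta>"
    using AE_avoid3 by (rule AE_completion)
  then show "AE y in lebesgue. continuous (at x0 within {0..1}) (\<lambda>x. indicator {0..1} y *\<^sub>R (g y * K x y))"
    by eventually_elim (rule continuous_scaleR[OF continuous_const continuous_mult[OF continuous_const Kc]], auto)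
qed

end


lemma int_compl: fixes f :: "real \<Rightarrow> real" assumes "f \<in> borel_measurable borel"
  shows "integral\<^sup>L lebesgue f = integral\<^sup>L lborel f"
  by (rule integral_completion) (use assms in \<open>simp add: measurable_lborel1\<close>)

context setting begin

lemma bdd_int: fixes f :: "real \<Rightarrow> real"
  assumes "f \<in> borel_measurable borel" "\<And>y. \<bar>f y\<bar> \<le> B"
  shows "integrable lborel (\<lambda>y. indicator {a..b} y * f y)"
proof (rule Bochner_Integration.integrable_bound[where f="\<lambda>y. indicator {a..b} y * B"])
  show "integrable lborel (\<lambda>y::real. indicator {a..b} y * B)"
    using borel_integrable_atLeastAtMost'[of a b "\<lambda>y. B"] by (simp add: set_integrable_def mult.commute)
  show "(\<lambda>y. indicator {a..b} y * f y) \<in> borel_measurable lborel"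
    using assms(1) by (simp add: measurable_lborel1)
  show "AE x in lborel. norm (indicator {a..b} x * f x) \<le> norm (indicator {a..b} x * B)"
    using assms(2) by (auto simp: indicator_def intro: order_trans[OF _ abs_ge_self])
qed

definition "a x = a_delta w \<delta> x"
definition "Kw x = (LINT y:{0..1}|lebesgue. wh x y)"
definition "s x = a x - Kw x"

lemma a_leb: "a x = (LINT y:{0..1}|lebesgue. w_delta w \<delta> x y)"
  unfolding a_def a_delta_def set_lebesgue_integral_def
  by (rule int_compl[symmetric]) measurable

lemma a_cont: "continuous_on {0..1} a"
proof -
  have "continuous_on {0..1} (\<lambda>x. LINT y:{0..1}|lebesgue. (\<lambda>_. 1::real) y * w_delta w \<delta> x y)"
  proof (rule Kcont[where B=1])
    fix x0 y :: real assume "y \<noteq> x0" "y \<noteq> x0 - \<delta>" "y \<noteq> x0 + \<delta>"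
    then have "\<bar>x0 - y\<bar> \<noteq> \<delta>" by auto
    then show "continuous (at x0 within {0..1}) (\<lambda>x. w_delta w \<delta> x y)" by (rule wd_cont)
  qed (use wd_nonneg wd_le in auto)
  then show ?thesis by (simp add: a_leb)
qed

lemma Kw_cont: "continuous_on {0..1} Kw"
proof -
  have "continuous_on {0..1} (\<lambda>x. LINT y:{0..1}|lebesgue. (\<lambda>_. 1::real) y * wh x y)"
  proof (rule Kcont[where B=1])
    fix x0 y :: real assume "y \<noteq> x0" "y \<noteq> x0 - \<delta>" "y \<noteq> x0 + \<delta>"
    then show "continuous (at x0 within {0..1}) (\<lambda>x. wh x y)" by (rule wh_cont)
  qed (use wh_nonneg wh_le in auto)
  then show ?thesis by (simp add: Kw_def)
qed

lemma s_cont: "continuous_on {0..1} s"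
  unfolding s_def[abs_def] by (intro continuous_on_diff a_cont Kw_cont)

lemma a_le: assumes "0 \<le> x" "x \<le> 1" shows "a x \<le> W"
proof -
  have "a x \<le> integral\<^sup>L lborel (\<lambda>y::real. indicator {0..1} y * W)"
    unfolding a_def a_delta_def set_lebesgue_integral_def
    by (rule int_le_gen) (auto simp: indicator_def wd_nonneg wd_le W_pos less_imp_le
       intro!: borel_integrable_atLeastAtMost'[of 0 1 "\<lambda>_. W", unfolded set_integrable_def, simplified])
  also have "\<dots> = W" by simp
  finally show ?thesis .
qed

definition "\<alpha> = cc * \<delta> / 2"
lemma alpha_pos: "\<alpha> > 0" unfolding \<alpha>_def using cc_pos dpos by auto

lemma a_ge: assumes "0 \<le> x" "x \<le> 1" shows "\<alpha> \<le> a x"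
proof -
  obtain p where p: "0 \<le> p" "p + \<delta>/2 \<le> 1" "p \<le> x" "x \<le> p + \<delta>/2"
  proof (cases "x \<le> 1/2")
    case True then show ?thesis using that[of x] assms dlt dpos by auto
  next
    case False then show ?thesis using that[of "x - \<delta>/2"] assms dlt dpos by auto
  qed
  have "\<alpha> = integral\<^sup>L lborel (\<lambda>y::real. indicator {p..p+\<delta>/2} y * cc)"
    unfolding \<alpha>_def using dpos by simp
  also have "\<dots> \<le> integral\<^sup>L lborel (\<lambda>y. indicator {0..1} y *\<^sub>R w_delta w \<delta> x y)"
  proof (rule integral_mono)
    show "integrable lborel (\<lambda>y::real. indicator {p..p+\<delta>/2} y * cc)"
      using borel_integrable_atLeastAtMost'[of p "p+\<delta>/2" "\<lambda>_. cc"] by (simp add: set_integrable_def mult.commute)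
    show "integrable lborel (\<lambda>y. indicator {0..1} y *\<^sub>R w_delta w \<delta> x y)"
      using bdd_int[of "\<lambda>y. w_delta w \<delta> x y" W 0 1] wd_nonneg wd_le by simp
    fix y
    show "indicator {p..p+\<delta>/2} y * cc \<le> indicator {0..1} y *\<^sub>R w_delta w \<delta> x y"
    proof (cases "y \<in> {p..p+\<delta>/2}")
      case True
      then have "\<bar>x - y\<bar> \<le> \<delta>/2" using p unfolding abs_le_iff atLeastAtMost_iff by linarith
      then have "cc \<le> w_delta w \<delta> x y" unfolding wd_F by (intro F_ge_cc) auto
      then show ?thesis using True p by (auto simp: indicator_def)
    qed (auto simp: indicator_def wd_nonneg)
  qed
  also have "\<dots> = a x" unfolding a_def a_delta_def set_lebesgue_integral_def ..
  finally show ?thesis .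
qed

lemma Kw_lborel: "Kw x = (LINT y:{0..1}|lborel. wh x y)"
  unfolding Kw_def set_lebesgue_integral_def by (rule int_compl) measurable

lemma s_nonneg_open: assumes A2: "\<forall>x. 0 < x \<and> x < 1 \<longrightarrow>
               a_delta w \<delta> x \<ge> set_lebesgue_integral lborel {0..1} (\<lambda>y. wt_delta w \<delta> x y)"
  and x: "0 < x" "x < 1" shows "0 \<le> s x"
proof -
  have "Kw x = (LINT y:{0..1}|lborel. wt_delta w \<delta> x y)"
    unfolding Kw_lborel using wt_eq[OF x] by simp
  then show ?thesis using A2 x unfolding s_def a_def by auto
qed

lemma s_nonneg: assumes A2: "\<forall>x. 0 < x \<and> x < 1 \<longrightarrow>
               a_delta w \<delta> x \<ge> set_lebesgue_integral lborel {0..1} (\<lambda>y. wt_delta w \<delta> x y)"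
  and x: "0 \<le> x" "x \<le> 1" shows "0 \<le> s x"
proof -
  have "continuous_on (closure {0<..<1}) s" using s_cont by simp
  moreover have "x \<in> closure {0<..<1::real}" using x by simp
  ultimately show ?thesis
    by (rule continuous_ge_on_closure) (use s_nonneg_open[OF A2] in auto)
qed

end


locale mainloc = setting +
  fixes \<phi> :: "real \<Rightarrow> real"
  assumes A2: "\<forall>x. 0 < x \<and> x < 1 \<longrightarrow>
               a_delta w \<delta> x \<ge> set_lebesgue_integral lborel {0..1} (\<lambda>y. wt_delta w \<delta> x y)"
    and L2: "L2_Omega \<phi>"
    and hyp: "AE x in lebesgue. x \<in> {0<..<1} \<longrightarrow> Pt_delta w \<delta> \<phi> x \<ge> 0"
begin

definition "phi0 y = indicator {0<..<1} y * \<phi> y"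
definition "v y = indicator {0<..<1} y * max 0 (- \<phi> y)"
definition "Kv x = (LINT y:{0..1}|lebesgue. v y * wh x y)"

lemma phi0_meas[measurable]: "phi0 \<in> borel_measurable lebesgue"
  using L2 unfolding L2_Omega_def set_borel_measurable_def phi0_def by (simp add: fun_eq_iff)

lemma ind01_int: "integrable lebesgue (\<lambda>y::real. indicator {0<..<1} y :: real)"
proof -
  have "integrable lborel (\<lambda>y::real. indicator {0<..<1} y :: real)"
    by (simp add: integrable_indicator_iff ennreal_less_top)
  then show ?thesis by (rule int_leb)
qed

lemma phi0_int: "integrable lebesgue phi0"
proof (rule Bochner_Integration.integrable_bound[where f="\<lambda>y. indicator {0<..<1} y + indicator {0<..<1} y * (\<phi> y)^2"])
  have "integrable lebesgue (\<lambda>y. indicator {0<..<1} y * (\<phi> y)^2)"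
    using L2 unfolding L2_Omega_def set_integrable_def by simp
  then show "integrable lebesgue (\<lambda>y. indicator {0<..<1} y + indicator {0<..<1} y * (\<phi> y)^2)"
    using ind01_int by (rule Bochner_Integration.integrable_add[rotated])
  show "phi0 \<in> borel_measurable lebesgue" by (rule phi0_meas)
  show "AE x in lebesgue. norm (phi0 x) \<le> norm (indicator {0<..<1} x + indicator {0<..<1} x * (\<phi> x)^2)"
  proof (rule AE_I2)
    fix x
    have "\<bar>\<phi> x\<bar> \<le> 1 + (\<phi> x)^2"
    proof (cases "\<bar>\<phi> x\<bar> \<le> 1")
      case False
      then have "\<bar>\<phi> x\<bar> \<le> \<bar>\<phi> x\<bar> * \<bar>\<phi> x\<bar>" by (intro mult_le_cancel_left1[THEN iffD2] ) auto
      then show ?thesis by (simp add: power2_eq_square abs_mult[symmetric])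
    qed (use zero_le_power2[of "\<phi> x"] in linarith)
    then show "norm (phi0 x) \<le> norm (indicator {0<..<1} x + indicator {0<..<1} x * (\<phi> x)^2)"
      by (auto simp: phi0_def indicator_def)
  qed
qed

lemma v_alt: "v y = max 0 (- phi0 y)" unfolding v_def phi0_def by (auto simp: indicator_def)
lemma v_meas[measurable]: "v \<in> borel_measurable lebesgue" unfolding v_alt[abs_def] by measurable
lemma v_nonneg: "0 \<le> v y" unfolding v_def by (auto simp: indicator_def)
lemma v_int: "integrable lebesgue v"
  by (rule Bochner_Integration.integrable_bound[OF phi0_int v_meas]) (auto simp: v_alt)

lemma mult_bdd_int: fixes g h :: "real \<Rightarrow> real"
  assumes "integrable lebesgue g" "h \<in> borel_measurable lebesgue" "\<And>y. \<bar>h y\<bar> \<le> W"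
  shows "integrable lebesgue (\<lambda>y. g y * h y)"
proof (rule Bochner_Integration.integrable_bound[where f="\<lambda>y. W * g y"])
  show "integrable lebesgue (\<lambda>y. W * g y)" using assms(1) by simp
  show "(\<lambda>y. g y * h y) \<in> borel_measurable lebesgue" using assms by measurable
  show "AE y in lebesgue. norm (g y * h y) \<le> norm (W * g y)"
    using assms(3) W_pos by (auto simp: abs_mult mult.commute intro!: mult_left_mono)
qed

lemma wh_leb[measurable]: "(\<lambda>y. wh x y) \<in> borel_measurable lebesgue"
  by (rule measurable_completion) (simp add: measurable_lborel1)

lemma Kv_eq: "Kv x = integral\<^sup>L lebesgue (\<lambda>y. v y * wh x y)"
  unfolding Kv_def set_lebesgue_integral_def
  by (rule Bochner_Integration.integral_cong) (auto simp: v_def indicator_def)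

lemma key: assumes x: "0 < x" "x < 1" and P: "Pt_delta w \<delta> \<phi> x \<ge> 0"
  shows "a x * v x \<le> Kv x"
proof -
  have xx: "0 \<le> x" "x \<le> 1" using x by auto
  have ind_eq: "indicator {0..1} y * (\<phi> y * wt_delta w \<delta> x y)
       = phi0 y * wh x y + indicator {0} y * (\<phi> 0 * wh x 0) + indicator {1} y * (\<phi> 1 * wh x 1)" for y
    using wt_eq[OF x] by (auto simp: indicator_def phi0_def)
  have J: "(LINT y:{0..1}|lebesgue. \<phi> y * wt_delta w \<delta> x y) = integral\<^sup>L lebesgue (\<lambda>y. phi0 y * wh x y)"
  proof -
    have "(LINT y:{0..1}|lebesgue. \<phi> y * wt_delta w \<delta> x y) =
       integral\<^sup>L lebesgue (\<lambda>y. phi0 y * wh x y + indicator {0} y * (\<phi> 0 * wh x 0) + indicator {1} y * (\<phi> 1 * wh x 1))"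
      unfolding set_lebesgue_integral_def by (simp add: ind_eq)
    also have "\<dots> = integral\<^sup>L lebesgue (\<lambda>y. phi0 y * wh x y)"
    proof (rule integral_cong_AE)
      show "AE y in lebesgue. phi0 y * wh x y + indicator {0} y * (\<phi> 0 * wh x 0) + indicator {1} y * (\<phi> 1 * wh x 1) = phi0 y * wh x y"
        using AE_completion[OF AE_avoid3[of 0 1 0]] by eventually_elim (auto simp: indicator_def)
    qed (intro borel_measurable_add borel_measurable_times phi0_meas wh_leb borel_measurable_indicator
           borel_measurable_const; simp)+
    finally show ?thesis .
  qed
  have i1: "integrable lebesgue (\<lambda>y. phi0 y * wh x y)"
    by (rule mult_bdd_int[OF phi0_int]) (use wh_le[OF xx] wh_nonneg in auto)
  have i2: "integrable lebesgue (\<lambda>y. v y * wh x y)"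
    by (rule mult_bdd_int[OF v_int]) (use wh_le[OF xx] wh_nonneg in auto)
  show ?thesis
  proof (cases "\<phi> x \<ge> 0")
    case True
    then have "v x = 0" unfolding v_def by auto
    moreover have "0 \<le> Kv x" unfolding Kv_eq
      by (rule Bochner_Integration.integral_nonneg) (simp add: v_nonneg wh_nonneg)
    ultimately show ?thesis by simp
  next
    case False
    then have vx: "v x = - \<phi> x" unfolding v_def using x by auto
    have "a x * \<phi> x \<ge> integral\<^sup>L lebesgue (\<lambda>y. phi0 y * wh x y)"
      using P J unfolding Pt_delta_def a_def by simp
    then have "a x * v x \<le> - integral\<^sup>L lebesgue (\<lambda>y. phi0 y * wh x y)" by (simp add: vx)
    also have "\<dots> = integral\<^sup>L lebesgue (\<lambda>y. - (phi0 y * wh x y))" by simp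
    also have "\<dots> \<le> integral\<^sup>L lebesgue (\<lambda>y. v y * wh x y)"
    proof (rule integral_mono)
      show "integrable lebesgue (\<lambda>y. - (phi0 y * wh x y))" using i1 by simp
      show "integrable lebesgue (\<lambda>y. v y * wh x y)" by (rule i2)
      fix y
      have "- phi0 y \<le> v y" by (simp add: v_alt)
      then show "- (phi0 y * wh x y) \<le> v y * wh x y"
        using mult_right_mono[OF _ wh_nonneg[of x y], of "- phi0 y" "v y"] by simp
    qed
    finally show ?thesis by (simp add: Kv_eq)
  qed
qed

end


lemma AE_ex: fixes a b :: real assumes ab: "a < b" and P: "AE x in lebesgue. P x"
  shows "\<exists>x. a < x \<and> x < b \<and> P x"
proof (rule ccontr)
  assume "\<not> ?thesis"
  then have sub: "{a<..<b} \<subseteq> {x. \<not> P x}" by auto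
  from P have "AE x in lborel. P x" by (simp add: AE_completion_iff)
  then obtain N where N: "{x \<in> space lborel. \<not> P x} \<subseteq> N" "emeasure lborel N = 0" "N \<in> sets lborel" by (rule AE_E)
  then have "{a<..<b} \<subseteq> N" using sub by auto
  then have "emeasure lborel {a<..<b} \<le> emeasure lborel N" by (intro emeasure_mono) (use N in auto)
  also have "\<dots> = 0" using N by auto
  finally show False using ab by simp
qed

context mainloc begin

lemma key_AE: "AE x in lebesgue. x \<in> {0<..<1} \<longrightarrow> a x * v x \<le> Kv x"
  using hyp by eventually_elim (auto intro: key)

lemma Kv_le: assumes "0 \<le> x" "x \<le> 1" shows "Kv x \<le> W * integral\<^sup>L lebesgue v"
proof -
  have "Kv x \<le> integral\<^sup>L lebesgue (\<lambda>y. W * v y)" unfolding Kv_eq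
  proof (rule integral_mono)
    show "integrable lebesgue (\<lambda>y. v y * wh x y)"
      by (rule mult_bdd_int[OF v_int]) (use wh_le[OF assms] wh_nonneg in auto)
    show "integrable lebesgue (\<lambda>y. W * v y)" using v_int by simp
    fix y show "v y * wh x y \<le> W * v y"
      using mult_left_mono[OF wh_le[OF assms, of y] v_nonneg[of y]] by (simp add: mult.commute)
  qed
  then show ?thesis by simp
qed

definition "C = W * integral\<^sup>L lebesgue v / \<alpha>"

lemma C_nonneg: "0 \<le> C"
  unfolding C_def using W_pos alpha_pos integral_nonneg_AE[of v lebesgue] v_nonneg by auto

lemma v_bdd: "AE x in lebesgue. v x \<le> C"
  using key_AE
proof eventually_elim
  case (elim x)
  show ?case
  proof (cases "x \<in> {0<..<1}")
    case True
    then have x: "0 \<le> x" "x \<le> 1" by auto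
    have "\<alpha> * v x \<le> a x * v x" using a_ge[OF x] v_nonneg[of x] by (rule mult_right_mono)
    also have "\<dots> \<le> Kv x" using elim True by auto
    also have "\<dots> \<le> W * integral\<^sup>L lebesgue v" by (rule Kv_le[OF x])
    finally show ?thesis unfolding C_def using alpha_pos by (simp add: field_simps)
  next
    case False then show ?thesis using C_nonneg unfolding v_def by auto
  qed
qed

definition "Mset = {c. AE x in lebesgue. v x \<le> c}"
definition "M = Inf Mset"

lemma Mset_ne: "C \<in> Mset" unfolding Mset_def using v_bdd by simp

lemma Mset_ge0: assumes "c \<in> Mset" shows "0 \<le> c"
proof -
  have "AE x in lebesgue. v x \<le> c" using assms unfolding Mset_def by simp
  then obtain x where "0 < x" "x < (1::real)" "v x \<le> c" using AE_ex[of 0 1] by auto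
  then show ?thesis using v_nonneg[of x] by simp
qed

lemma Mset_bdd: "bdd_below Mset" using Mset_ge0 by (auto simp: bdd_below_def)

lemma M_nonneg: "0 \<le> M" unfolding M_def using Mset_ne Mset_ge0 by (intro cInf_greatest) auto

lemma M_AE: "AE x in lebesgue. v x \<le> M"
proof -
  have "\<forall>n::nat. AE x in lebesgue. v x \<le> M + 1 / Suc n"
  proof
    fix n :: nat
    have "M < M + 1 / Suc n" by simp
    then obtain c where "c \<in> Mset" "c < M + 1 / Suc n"
      unfolding M_def using cInf_less_iff[OF _ Mset_bdd] Mset_ne by blast
    then show "AE x in lebesgue. v x \<le> M + 1 / Suc n" unfolding Mset_def
      by (auto elim!: eventually_mono)
  qed
  then have "AE x in lebesgue. \<forall>n::nat. v x \<le> M + 1 / Suc n" by (simp add: AE_all_countable)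
  then show ?thesis
  proof eventually_elim
    case (elim x)
    show ?case
    proof (rule ccontr)
      assume "\<not> v x \<le> M"
      then have "0 < v x - M" by simp
      then obtain n where "inverse (real (Suc n)) < v x - M" using reals_Archimedean by blast
      then have "1 / real (Suc n) < v x - M" by (simp add: inverse_eq_divide)
      then show False using elim[rule_format, of n] by simp
    qed
  qed
qed

lemma M_sup: assumes "0 < t" shows "\<not> (AE x in lebesgue. v x \<le> M - t)"
proof
  assume "AE x in lebesgue. v x \<le> M - t"
  then have "M - t \<in> Mset" unfolding Mset_def by simp
  then have "M \<le> M - t" unfolding M_def using Mset_bdd by (rule cInf_lower)
  then show False using assms by simp
qed

definition "vt y = min (v y) M"
lemma vt_meas[measurable]: "vt \<in> borel_measurable lebesgue" unfolding vt_def[abs_def] by measurable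
lemma vt_nonneg: "0 \<le> vt y" unfolding vt_def using v_nonneg M_nonneg by simp
lemma vt_le: "vt y \<le> M" unfolding vt_def by simp
lemma vt_AE: "AE y in lebesgue. vt y = v y" using M_AE by eventually_elim (simp add: vt_def)

definition "Kvt x = (LINT y:{0..1}|lebesgue. vt y * wh x y)"
definition "R x = (LINT y:{0..1}|lebesgue. (M - vt y) * wh x y)"
definition "Phi x = M * a x - Kvt x"

lemma Kvt_Kv: "Kvt x = Kv x"
  unfolding Kvt_def Kv_def set_lebesgue_integral_def
proof (rule integral_cong_AE)
  show "AE y in lebesgue. indicator {0..1} y *\<^sub>R (vt y * wh x y) = indicator {0..1} y *\<^sub>R (v y * wh x y)"
    using vt_AE by eventually_elim simp
qed (intro borel_measurable_scaleR borel_measurable_times borel_measurable_indicator vt_meas v_meas wh_leb; simp)+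

lemma Phi_cont: "continuous_on {0..1} Phi"
proof -
  have "continuous_on {0..1} Kvt"
    unfolding Kvt_def[abs_def]
  proof (rule Kcont[where B=M])
    fix x0 y :: real assume "y \<noteq> x0" "y \<noteq> x0 - \<delta>" "y \<noteq> x0 + \<delta>"
    then show "continuous (at x0 within {0..1}) (\<lambda>x. wh x y)" by (rule wh_cont)
  qed (use wh_nonneg wh_le vt_nonneg vt_le in auto)
  then show ?thesis unfolding Phi_def[abs_def] by (intro continuous_on_diff continuous_on_mult a_cont continuous_on_const)
qed

lemma bdd_int_leb: fixes f :: "real \<Rightarrow> real"
  assumes "f \<in> borel_measurable lebesgue" "\<And>y. \<bar>f y\<bar> \<le> B"
  shows "integrable lebesgue (\<lambda>y. indicator {0..1} y * f y)"
proof (rule Bochner_Integration.integrable_bound[where f="\<lambda>y. indicator {0..1} y * B"])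
  have "integrable lborel (\<lambda>y::real. indicator {0..1} y * B)"
    by (rule bdd_int) auto
  then show "integrable lebesgue (\<lambda>y::real. indicator {0..1} y * B)" by (rule int_leb)
  show "(\<lambda>y. indicator {0..1} y * f y) \<in> borel_measurable lebesgue"
    by (intro borel_measurable_times borel_measurable_indicator assms(1)) simp
  show "AE x in lebesgue. norm (indicator {0..1} x * f x) \<le> norm (indicator {0..1} x * B)"
    using assms(2) by (auto simp: indicator_def intro: order_trans[OF _ abs_ge_self])
qed

lemma Phi_decomp: assumes "0 \<le> x" "x \<le> 1" shows "Phi x = M * s x + R x"
proof -
  have i1: "integrable lebesgue (\<lambda>y. indicator {0..1} y * wh x y)"
    by (rule bdd_int_leb[where B=W]) (use wh_le[OF assms] wh_nonneg in auto)
  have i2: "integrable lebesgue (\<lambda>y. indicator {0..1} y * (vt y * wh x y))"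
  proof (rule bdd_int_leb[where B="M*W"])
    show "\<bar>vt y * wh x y\<bar> \<le> M * W" for y
      unfolding abs_mult using vt_nonneg[of y] vt_le[of y] wh_le[OF assms, of y] wh_nonneg[of x y] M_nonneg
      by (auto intro!: mult_mono)
  qed measurable
  have "R x = integral\<^sup>L lebesgue (\<lambda>y. M * (indicator {0..1} y * wh x y) - indicator {0..1} y * (vt y * wh x y))"
    unfolding R_def set_lebesgue_integral_def by (rule Bochner_Integration.integral_cong) (auto simp: algebra_simps)
  also have "\<dots> = M * Kw x - Kvt x"
    using i1 i2 unfolding Kw_def Kvt_def set_lebesgue_integral_def by simp
  finally show ?thesis unfolding Phi_def s_def by (simp add: algebra_simps)
qed

lemma R_nonneg: "0 \<le> R x"
  unfolding R_def set_lebesgue_integral_def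
  by (rule Bochner_Integration.integral_nonneg) (use vt_le wh_nonneg in \<open>auto simp: indicator_def\<close>)

lemma Phi_nonneg: assumes "0 \<le> x" "x \<le> 1" shows "0 \<le> Phi x"
  using Phi_decomp[OF assms] s_nonneg[OF A2 assms] M_nonneg R_nonneg by simp

lemma Phi_le_AE: "AE x in lebesgue. x \<in> {0<..<1} \<longrightarrow> Phi x \<le> a x * (M - v x)"
  using key_AE by eventually_elim (auto simp: Phi_def Kvt_Kv algebra_simps)

end

context mainloc begin

lemma v_out: "x \<notin> {0<..<1} \<Longrightarrow> v x = 0" unfolding v_def by simp

lemma Phi_small: assumes t: "0 < t" "t < M" shows "\<exists>x\<in>{0..1}. Phi x \<le> W * t"
proof -
  have nAE: "\<not> (AE x in lebesgue. v x \<le> M - t)" using M_sup t by simp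
  have AEP: "AE x in lebesgue. (x \<in> {0<..<1} \<longrightarrow> Phi x \<le> a x * (M - v x)) \<and> v x \<le> M"
    using Phi_le_AE M_AE by eventually_elim simp
  have "\<not> (\<forall>x. (x \<in> {0<..<1} \<longrightarrow> Phi x \<le> a x * (M - v x)) \<and> v x \<le> M \<longrightarrow> v x \<le> M - t)"
  proof
    assume H: "\<forall>x. (x \<in> {0<..<1} \<longrightarrow> Phi x \<le> a x * (M - v x)) \<and> v x \<le> M \<longrightarrow> v x \<le> M - t"
    have "AE x in lebesgue. v x \<le> M - t" using AEP by (rule eventually_mono) (use H in blast)
    then show False using nAE by contradiction
  qed
  then obtain x where x: "x \<in> {0<..<1} \<longrightarrow> Phi x \<le> a x * (M - v x)" "v x \<le> M" "\<not> v x \<le> M - t"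
    by blast
  have "x \<in> {0<..<1}"
  proof (rule ccontr)
    assume "x \<notin> {0<..<1}"
    then have "v x = 0" by (rule v_out)
    then show False using x(3) t by simp
  qed
  then have xx: "0 \<le> x" "x \<le> 1" and P: "Phi x \<le> a x * (M - v x)" using x by auto
  have "a x * (M - v x) \<le> W * t"
    by (rule mult_mono) (use a_le[OF xx] x(2,3) W_pos in linarith)+
  then show ?thesis using P xx by (intro bexI[of _ x]) auto
qed

lemma Phi_zero_exists: assumes "M > 0" shows "\<exists>x0\<in>{0..1}. Phi x0 = 0"
proof -
  obtain x0 where x0: "x0 \<in> {0..1}" "\<And>y. y \<in> {0..1} \<Longrightarrow> Phi x0 \<le> Phi y"
    using continuous_attains_inf[OF compact_Icc _ Phi_cont] by fastforce
  have "Phi x0 \<le> 0"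
  proof (rule ccontr)
    assume "\<not> Phi x0 \<le> 0"
    define t where "t = min (M/2) (Phi x0 / (2*W))"
    have t: "0 < t" "t < M" using assms \<open>\<not> Phi x0 \<le> 0\<close> W_pos unfolding t_def by auto
    obtain x where "x \<in> {0..1}" "Phi x \<le> W * t" using Phi_small[OF t] by blast
    moreover have "W * t < Phi x0"
    proof -
      have "W * t \<le> W * (Phi x0 / (2*W))" unfolding t_def using W_pos by (intro mult_left_mono) auto
      also have "\<dots> < Phi x0" using W_pos \<open>\<not> Phi x0 \<le> 0\<close> by (simp add: field_simps)
      finally show ?thesis .
    qed
    ultimately show False using x0(2) by force
  qed
  then show ?thesis using x0 Phi_nonneg[of x0] by force
qed

lemma Phi_zero_s: assumes "M > 0" "0 \<le> x" "x \<le> 1" "Phi x = 0" shows "s x = 0" "R x = 0"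
  using Phi_decomp[OF assms(2,3)] s_nonneg[OF A2 assms(2,3)] R_nonneg[of x] assms(1,4)
  by (auto simp: add_nonneg_eq_0_iff zero_less_mult_iff)

lemma R_zero_AE: assumes "0 \<le> x" "x \<le> 1" "R x = 0"
  shows "AE y in lebesgue. y \<in> {0..1} \<longrightarrow> (M - vt y) * wh x y = 0"
proof -
  have int: "integrable lebesgue (\<lambda>y. indicator {0..1} y * ((M - vt y) * wh x y))"
  proof (rule bdd_int_leb[where B="M*W"])
    show "\<bar>(M - vt y) * wh x y\<bar> \<le> M * W" for y
      unfolding abs_mult using vt_nonneg[of y] vt_le[of y] wh_le[OF assms(1,2), of y] wh_nonneg[of x y] M_nonneg
      by (auto intro!: mult_mono)
  qed (intro borel_measurable_times borel_measurable_diff borel_measurable_const vt_meas wh_leb)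
  have "integral\<^sup>L lebesgue (\<lambda>y. indicator {0..1} y * ((M - vt y) * wh x y)) = 0"
    using assms(3) unfolding R_def set_lebesgue_integral_def by simp
  then have "AE y in lebesgue. indicator {0..1} y * ((M - vt y) * wh x y) = 0"
    using integral_nonneg_eq_0_iff_AE[OF int] vt_le wh_nonneg by (auto simp: indicator_def)
  then show ?thesis by eventually_elim (auto simp: indicator_def)
qed

lemma propag: assumes M: "M > 0" and x: "0 \<le> x" "x \<le> 1" "Phi x = 0"
  and pq: "p < q" "0 \<le> p" "q \<le> 1" and pos: "\<And>y. p < y \<Longrightarrow> y < q \<Longrightarrow> wh x y > 0"
  shows "\<And>y. p \<le> y \<Longrightarrow> y \<le> q \<Longrightarrow> Phi y = 0"
proof -
  have R0: "R x = 0" using Phi_zero_s[OF M x] by simp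
  have AEz: "AE y in lebesgue. p < y \<and> y < q \<longrightarrow> Phi y \<le> 0"
    using R_zero_AE[OF x(1,2) R0] vt_AE Phi_le_AE
  proof eventually_elim
    case (elim y)
    show ?case
    proof
      assume y: "p < y \<and> y < q"
      then have "wh x y > 0" using pos by auto
      moreover have "(M - vt y) * wh x y = 0" using elim y pq by auto
      ultimately have "vt y = M" by simp
      then have "v y = M" using elim by simp
      moreover have "y \<in> {0<..<1}" using y pq by auto
      ultimately show "Phi y \<le> 0" using elim by auto
    qed
  qed
  fix y0 assume y0: "p \<le> y0" "y0 \<le> q"
  show "Phi y0 = 0"
  proof (rule ccontr)
    assume "Phi y0 \<noteq> 0"
    then have pos0: "Phi y0 > 0" using Phi_nonneg[of y0] y0 pq by force
    have "y0 \<in> {0..1}" using y0 pq by auto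
    from continuous_on_iff[THEN iffD1, OF Phi_cont, rule_format, OF this pos0]
    obtain d where d: "d > 0" "\<And>y. y \<in> {0..1} \<Longrightarrow> dist y y0 < d \<Longrightarrow> dist (Phi y) (Phi y0) < Phi y0"
      by blast
    have "max p (y0 - d) < min q (y0 + d)" using d pq y0 by auto
    from AE_ex[OF this AEz]
    obtain y where y: "max p (y0 - d) < y" "y < min q (y0 + d)" "p < y \<and> y < q \<longrightarrow> Phi y \<le> 0"
      by blast
    then have "Phi y \<le> 0" by auto
    moreover have "y \<in> {0..1}" "dist y y0 < d" using y pq by (auto simp: dist_real_def)
    ultimately show False using d(2)[of y] by (auto simp: dist_real_def)
  qed
qed

end

context setting begin

lemma wh_interior: assumes "\<delta> \<le> x" "x \<le> 1 - \<delta>" "\<bar>y - x\<bar> < \<delta>" shows "wh x y > 0"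
proof -
  have "bh x = 0" using bh_mid assms by auto
  then have "wh x y = F \<bar>x - y\<bar>" unfolding wh_def wd_F using F_nonneg by simp
  moreover have "F \<bar>x - y\<bar> > 0" using assms by (intro F_pos) auto
  ultimately show ?thesis by simp
qed

lemma F_near0: assumes "b < W" shows "\<exists>\<rho>>0. \<rho> \<le> \<delta> \<and> (\<forall>r. 0 \<le> r \<longrightarrow> r < \<rho> \<longrightarrow> b < F r)"
proof -
  have "continuous (at 0 within {0..}) w" using w_cont_at[of 0] by simp
  then have "\<forall>e>0. \<exists>d>0. \<forall>r\<in>{0..}. dist r 0 < d \<longrightarrow> dist (w r) (w 0) < e"
    unfolding continuous_within_eps_delta by simp
  moreover have "(W - b) * \<delta>^3 > 0" using assms dpos by simp
  ultimately obtain d where d: "d > 0" "\<And>r. r \<ge> 0 \<Longrightarrow> \<bar>r\<bar> < d \<Longrightarrow> \<bar>w r - w 0\<bar> < (W - b) * \<delta>^3"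
    by (auto simp: dist_real_def)
  show ?thesis
  proof (intro exI[of _ "min (d*\<delta>) \<delta>"] conjI allI impI)
    show "0 < min (d*\<delta>) \<delta>" using d dpos by simp
    show "min (d*\<delta>) \<delta> \<le> \<delta>" by simp
    fix r assume r: "0 \<le> r" "r < min (d*\<delta>) \<delta>"
    then have "r/\<delta> < d" using dpos by (simp add: field_simps)
    then have "\<bar>w (r/\<delta>) - w 0\<bar> < (W - b) * \<delta>^3" using d(2)[of "r/\<delta>"] r dpos by simp
    then have "w 0 - (W - b) * \<delta>^3 < w (r/\<delta>)" by linarith
    then have "(w 0 - (W - b) * \<delta>^3) / \<delta>^3 < w (r/\<delta>) / \<delta>^3" using dpos by (simp add: divide_strict_right_mono)
    then show "b < F r" unfolding F_def using dpos by (simp add: W_def field_simps)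
  qed
qed

lemma wh_near: assumes x: "0 \<le> x" "x \<le> 1" and b: "bh x < W"
  shows "\<exists>\<rho>>0. \<forall>y. 0 < \<bar>y - x\<bar> \<longrightarrow> \<bar>y - x\<bar> < \<rho> \<longrightarrow> wh x y > 0"
proof -
  obtain \<rho> where r: "\<rho> > 0" "\<rho> \<le> \<delta>" "\<And>r. 0 \<le> r \<Longrightarrow> r < \<rho> \<Longrightarrow> bh x < F r"
    using F_near0[OF b] by blast
  show ?thesis
  proof (intro exI[of _ \<rho>] conjI allI impI)
    fix y assume y: "0 < \<bar>y - x\<bar>" "\<bar>y - x\<bar> < \<rho>"
    then have "indicator {0<..<\<delta>} \<bar>y - x\<bar> = (1::real)" using r by auto
    moreover have "bh x < F \<bar>x - y\<bar>" using r(3)[of "\<bar>x - y\<bar>"] y by (simp add: abs_minus_commute)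
    ultimately show "wh x y > 0" unfolding wh_def wd_F by simp
  qed (use r in auto)
qed

lemma wh_far: assumes x: "0 \<le> x" "x \<le> 1" and b: "bh x \<ge> W" and r0: "0 < r0" "r0 < 1" "w r0 < w 0"
  and y: "r0 * \<delta> < \<bar>y - x\<bar>" "\<bar>y - x\<bar> < \<delta>"
  shows "wh x y > 0"
proof -
  have bW: "bh x = W" using b bh_le_W[OF x] by simp
  have "0 < r0 * \<delta>" using r0 dpos by simp
  then have "indicator {0<..<\<delta>} \<bar>y - x\<bar> = (1::real)" using y by (simp add: indicator_def)
  moreover have "F \<bar>x - y\<bar> < W"
  proof -
    have "r0 \<le> \<bar>x - y\<bar> / \<delta>" "\<bar>x - y\<bar> / \<delta> < 1" using y dpos by (auto simp: field_simps abs_minus_commute)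
    then have "w (\<bar>x - y\<bar> / \<delta>) \<le> w r0" using r0 by (intro w_mono) auto
    then have "w (\<bar>x - y\<bar> / \<delta>) < w 0" using r0 by simp
    then show ?thesis unfolding F_def W_def using dpos by (simp add: divide_strict_right_mono)
  qed
  ultimately show ?thesis unfolding wh_def wd_F bW by simp
qed

lemma const_case: assumes x: "0 \<le> x" "x \<le> 1" and b: "bh x \<ge> W" and c: "\<forall>r. 0 \<le> r \<and> r < 1 \<longrightarrow> w r = w 0"
  shows "s x > 0"
proof -
  have bW: "bh x = W" using b bh_le_W[OF x] by simp
  have "AE y in lebesgue. indicator {0..1} y *\<^sub>R wh x y = 0"
    using AE_completion[OF AE_lborel_singleton[of x]]
  proof eventually_elim
    case (elim y)
    show ?case
    proof (cases "\<bar>y - x\<bar> < \<delta>")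
      case True
      then have "F \<bar>x - y\<bar> = W" unfolding F_def W_def using c dpos
        by (metis abs_ge_zero abs_minus_commute divide_less_eq_1_pos divide_nonneg_pos)
      then show ?thesis using True elim unfolding wh_def wd_F bW by (simp add: abs_minus_commute)
    next
      case False
      then show ?thesis unfolding wh_def wd_F using F_zero[of "\<bar>x - y\<bar>"] by (simp add: abs_minus_commute)
    qed
  qed
  then have "Kw x = 0" unfolding Kw_def set_lebesgue_integral_def by (rule integral_eq_zero_AE)
  then show ?thesis unfolding s_def using a_ge[OF x] alpha_pos by simp
qed

end

context setting begin

lemma ind_int: "integrable lborel (\<lambda>y::real. indicator {p..q} y :: real)"
  by (simp add: integrable_indicator_iff emeasure_lborel_Icc_eq)

lemma ind_integral: "p \<le> q \<Longrightarrow> integral\<^sup>L lborel (\<lambda>y::real. indicator {p..q} y :: real) = q - p"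
  by simp

lemma wd_lin_bdd: "\<bar>(x - y) * w_delta w \<delta> x y\<bar> \<le> \<delta> * W"
proof (cases "\<bar>x - y\<bar> < \<delta>")
  case True
  then show ?thesis unfolding abs_mult using wd_nonneg[of x y] wd_le[of x y] dpos
    by (auto intro!: mult_mono)
next
  case False
  then show ?thesis unfolding wd_F using F_zero[of "\<bar>x-y\<bar>"] dpos W_pos by simp
qed

lemma I1_pos: assumes x: "0 < x" "x < \<delta>" shows "I1 x > 0"
proof -
  define z0 where "z0 = (x + \<delta>)/2"
  have z0: "x < z0" "z0 < \<delta>" unfolding z0_def using x by auto
  have Fz0: "F z0 > 0" using z0 x by (intro F_pos) auto
  have "0 < x * F z0 * (z0 - x)" using x z0 Fz0 by simp
  also have "\<dots> = integral\<^sup>L lborel (\<lambda>y::real. indicator {x - z0..0} y * (x * F z0))"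
    using z0 x by simp
  also have "\<dots> \<le> integral\<^sup>L lborel (\<lambda>y. indicator {x-\<delta>..0} y * ((x - y) * w_delta w \<delta> x y))"
  proof (rule integral_mono)
    show "integrable lborel (\<lambda>y::real. indicator {x - z0..0} y * (x * F z0))"
      using ind_int[of "x - z0" 0] by simp
    show "integrable lborel (\<lambda>y. indicator {x-\<delta>..0} y * ((x - y) * w_delta w \<delta> x y))"
      by (rule bdd_int[where B="\<delta> * W"]) (use wd_lin_bdd in auto)
    fix y
    show "indicator {x - z0..0} y * (x * F z0) \<le> indicator {x-\<delta>..0} y * ((x - y) * w_delta w \<delta> x y)"
    proof (cases "y \<in> {x - z0..0}")
      case True
      then have y: "x - \<delta> \<le> y" "y \<le> 0" "x - y \<le> z0" using z0 by auto
      have "F z0 \<le> F (x - y)" using y x by (intro F_mono) auto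
      then have "x * F z0 \<le> (x - y) * w_delta w \<delta> x y"
        unfolding wd_F using y x Fz0 by (auto intro!: mult_mono)
      then show ?thesis using True y by (simp add: indicator_def)
    next
      case False
      have "0 \<le> indicator {x-\<delta>..0} y * ((x - y) * w_delta w \<delta> x y)"
        using wd_nonneg[of x y] x by (auto simp: indicator_def)
      then show ?thesis using False by simp
    qed
  qed
  also have "\<dots> = I1 x" unfolding I1_def set_lebesgue_integral_def by simp
  finally show ?thesis .
qed

lemma s_lower: assumes x: "\<delta>/2 < x" "x < \<delta>" and b: "0 \<le> bh x" "bh x \<le> cc"
  shows "bh x * (\<delta> - x) \<le> s x"
proof -
  define b where "b = bh x"
  have xx: "0 \<le> x" "x \<le> 1" using x dlt by auto
  define g where "g y = b * (2 * indicator {x - \<delta>/2..x + \<delta>/2} y - indicator {0..x+\<delta>} y)" for y :: real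
  have gi: "integrable lborel g" unfolding g_def
    using ind_int[of "x - \<delta>/2" "x + \<delta>/2"] ind_int[of 0 "x+\<delta>"] by simp
  have "integral\<^sup>L lborel g = b * (2 * \<delta> - (x + \<delta>))"
    unfolding g_def using ind_int[of "x - \<delta>/2" "x + \<delta>/2"] ind_int[of 0 "x+\<delta>"] x dpos by simp
  also have "\<dots> = bh x * (\<delta> - x)" unfolding b_def by simp
  finally have gint: "integral\<^sup>L lborel g = bh x * (\<delta> - x)" .
  have i1: "integrable lborel (\<lambda>y. indicator {0..1} y * w_delta w \<delta> x y)"
    by (rule bdd_int[where B=W]) (use wd_nonneg wd_le in auto)
  have i2: "integrable lborel (\<lambda>y. indicator {0..1} y * wh x y)"
    by (rule bdd_int[where B=W]) (use wh_nonneg wh_le[OF xx] in auto)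
  have sx: "s x = integral\<^sup>L lborel (\<lambda>y. indicator {0..1} y * w_delta w \<delta> x y - indicator {0..1} y * wh x y)"
    unfolding s_def a_def a_delta_def Kw_lborel set_lebesgue_integral_def using i1 i2 by simp
  have "integral\<^sup>L lborel g \<le> integral\<^sup>L lborel (\<lambda>y. indicator {0..1} y * w_delta w \<delta> x y - indicator {0..1} y * wh x y)"
  proof (rule integral_mono_AE[OF gi])
    show "integrable lborel (\<lambda>y. indicator {0..1} y * w_delta w \<delta> x y - indicator {0..1} y * wh x y)"
      using i1 i2 by simp
    show "AE y in lborel. g y \<le> indicator {0..1} y * w_delta w \<delta> x y - indicator {0..1} y * wh x y"
      using AE_lborel_singleton[of x]
    proof eventually_elim
      case (elim y)
      define d where "d = \<bar>x - y\<bar>"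
      have dyx: "\<bar>y - x\<bar> = d" unfolding d_def by (simp add: abs_minus_commute)
      have whd: "wh x y = \<bar>F d - b * indicator {0<..<\<delta>} d\<bar>" unfolding wh_def wd_F d_def b_def
        by (simp add: abs_minus_commute)
      have wdd: "w_delta w \<delta> x y = F d" unfolding wd_F d_def ..
      have Fd: "0 \<le> F d" unfolding d_def by (rule F_nonneg) simp
      consider (A) "y \<in> {x - \<delta>/2..x + \<delta>/2}" | (B) "y \<notin> {x - \<delta>/2..x + \<delta>/2}" "y \<in> {0..x+\<delta>}"
        | (C) "y \<notin> {x - \<delta>/2..x + \<delta>/2}" "y \<notin> {0..x+\<delta>}" by blast
      then show ?case
      proof cases
        case A
        then have y01: "y \<in> {0..1}" "y \<in> {0..x+\<delta>}" using x dlt by auto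
        have d1: "0 < d" using elim unfolding d_def by simp
        have d2: "d \<le> \<delta>/2" using A unfolding d_def abs_le_iff atLeastAtMost_iff by linarith
        note d = d1 d2
        then have "cc \<le> F d" by (intro F_ge_cc) auto
        then have "b \<le> F d" using b unfolding b_def by simp
        moreover have "indicator {0<..<\<delta>} d = (1::real)" using d dpos by simp
        ultimately have "wh x y = F d - b" using whd by simp
        then show ?thesis using A y01 unfolding g_def wdd by simp
      next
        case B
        then have y01: "y \<in> {0..1}" using x dlt by auto
        have "wh x y \<le> F d + b" using whd Fd b unfolding b_def by (auto simp: indicator_def)
        then show ?thesis using B y01 unfolding g_def wdd by simp
      next
        case C
        show ?thesis
        proof (cases "y \<in> {0..1}")
          case True
          then have "d > \<delta>" using C x unfolding d_def by auto
          then have "F d = 0" "indicator {0<..<\<delta>} d = (0::real)" using F_zero[of d] by auto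
          then show ?thesis using C True unfolding g_def wdd whd by simp
        next
          case False then show ?thesis using C unfolding g_def by simp
        qed
      qed
    qed
  qed
  then show ?thesis using gint sx by simp
qed

lemma strict_point: "\<exists>x. \<delta>/2 < x \<and> x < \<delta> \<and> s x > 0"
proof -
  define \<eta> where "\<eta> = min (\<delta>/4) (cc * \<delta> / W)"
  have e1: "0 < \<eta>" unfolding \<eta>_def using dpos cc_pos W_pos by simp
  have e2: "\<eta> \<le> \<delta>/4" unfolding \<eta>_def by (rule min.cobounded1)
  have e3: "\<eta> \<le> cc * \<delta> / W" unfolding \<eta>_def by (rule min.cobounded2)
  note eta = e1 e2 e3
  define x where "x = \<delta> - \<eta>"
  have x: "\<delta>/2 < x" "x < \<delta>" "0 < x" using eta dpos unfolding x_def by auto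
  have "bh x \<le> W * (\<delta> - x) / (\<delta> + x)" using x by (intro bh_le_left) auto
  also have "\<dots> \<le> W * \<eta> / \<delta>" unfolding x_def using eta dpos W_pos
    by (intro divide_mono) auto
  also have "\<dots> \<le> cc" using eta(3) W_pos dpos by (simp add: field_simps)
  finally have bc: "bh x \<le> cc" .
  have "I2 x = 0" using x dlt by (intro I2_zero) auto
  then have "bh x = 2/(x+\<delta>)^2 * I1 x" unfolding bh_def by simp
  then have bpos: "bh x > 0" using I1_pos[of x] x dpos by simp
  have "0 < bh x * (\<delta> - x)" using bpos x by simp
  also have "\<dots> \<le> s x" using s_lower[of x] x bc bpos by simp
  finally show ?thesis using x by blast
qed

end

context mainloc begin

lemma Zcompact: assumes "0 \<le> p" "q \<le> 1" shows "compact {x \<in> {p..q}. Phi x = 0}"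
proof -
  have "continuous_on {p..q} Phi" using Phi_cont by (rule continuous_on_subset) (use assms in auto)
  then have "closed {x \<in> {p..q}. Phi x = 0}" by (rule continuous_closed_preimage_constant) simp
  moreover have "bounded {x \<in> {p..q}. Phi x = 0}" by (rule bounded_subset[of "{p..q}"]) auto
  ultimately show ?thesis by (simp add: compact_eq_bounded_closed)
qed

lemma Zmax: assumes "0 \<le> p" "q \<le> 1" "x \<in> {p..q}" "Phi x = 0"
  shows "\<exists>z\<in>{p..q}. Phi z = 0 \<and> (\<forall>y\<in>{p..q}. Phi y = 0 \<longrightarrow> y \<le> z)"
proof -
  have "{x \<in> {p..q}. Phi x = 0} \<noteq> {}" using assms(3,4) by auto
  from continuous_attains_sup[OF Zcompact[OF assms(1,2)] this continuous_on_id]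
  show ?thesis by auto
qed

lemma Zmin: assumes "0 \<le> p" "q \<le> 1" "x \<in> {p..q}" "Phi x = 0"
  shows "\<exists>z\<in>{p..q}. Phi z = 0 \<and> (\<forall>y\<in>{p..q}. Phi y = 0 \<longrightarrow> z \<le> y)"
proof -
  have "{x \<in> {p..q}. Phi x = 0} \<noteq> {}" using assms(3,4) by auto
  from continuous_attains_inf[OF Zcompact[OF assms(1,2)] this continuous_on_id]
  show ?thesis by auto
qed

lemma no_interior_zero: assumes M: "M > 0" shows "\<not> (\<exists>x. \<delta> \<le> x \<and> x \<le> 1 - \<delta> \<and> Phi x = 0)"
proof
  assume "\<exists>x. \<delta> \<le> x \<and> x \<le> 1 - \<delta> \<and> Phi x = 0"
  then obtain x where x: "x \<in> {\<delta>..1-\<delta>}" "Phi x = 0" by auto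
  obtain m where m: "m \<in> {\<delta>..1-\<delta>}" "Phi m = 0" "\<And>y. y \<in> {\<delta>..1-\<delta>} \<Longrightarrow> Phi y = 0 \<Longrightarrow> m \<le> y"
    using Zmin[of \<delta> "1-\<delta>" x] x dpos by auto
  have propm: "Phi y = 0" if "m - \<delta> \<le> y" "y \<le> m + \<delta>" for y
  proof (rule propag[OF M _ _ m(2), of "m - \<delta>" "m + \<delta>"])
    show "\<And>y. m - \<delta> < y \<Longrightarrow> y < m + \<delta> \<Longrightarrow> 0 < wh m y"
      using m(1) by (intro wh_interior) (auto simp: abs_less_iff)
  qed (use m(1) dpos that in auto)
  have "m = \<delta>"
  proof (rule ccontr)
    assume "m \<noteq> \<delta>"
    then have "m > \<delta>" using m(1) by auto
    define y where "y = max \<delta> (m - \<delta>/2)"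
    have "y \<in> {\<delta>..1-\<delta>}" "m - \<delta> \<le> y" "y \<le> m + \<delta>" "y < m" using m(1) dpos \<open>m > \<delta>\<close> unfolding y_def by auto
    then show False using m(3)[of y] propm[of y] by auto
  qed
  obtain xs where xs: "\<delta>/2 < xs" "xs < \<delta>" "s xs > 0" using strict_point by blast
  have "Phi xs = 0" using propm[of xs] xs \<open>m = \<delta>\<close> by auto
  then have "s xs = 0" using Phi_zero_s(1)[OF M, of xs] xs dlt by auto
  then show False using xs by simp
qed

lemma M_zero: "M = 0"
proof (rule ccontr)
  assume "M \<noteq> 0"
  then have M: "M > 0" using M_nonneg by simp
  have noint: "\<And>x. \<delta> \<le> x \<Longrightarrow> x \<le> 1 - \<delta> \<Longrightarrow> Phi x \<noteq> 0" using no_interior_zero[OF M] by blast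
  obtain x0 where x0: "x0 \<in> {0..1}" "Phi x0 = 0" using Phi_zero_exists[OF M] by blast
  have d1: "\<delta> \<le> 1 - \<delta>" using dlt by simp
  show False
  proof (cases "x0 < \<delta>")
    case True
    obtain z where z: "z \<in> {0..\<delta>}" "Phi z = 0" "\<And>y. y \<in> {0..\<delta>} \<Longrightarrow> Phi y = 0 \<Longrightarrow> y \<le> z"
      using Zmax[of 0 \<delta> x0] x0 True dlt by auto
    have zd: "z < \<delta>" using z noint[of z] d1 by force
    have z01: "0 \<le> z" "z \<le> 1" using z dlt by auto
    show False
    proof (cases "bh z < W")
      case True
      obtain \<rho> where r: "\<rho> > 0" "\<And>y. 0 < \<bar>y - z\<bar> \<Longrightarrow> \<bar>y - z\<bar> < \<rho> \<Longrightarrow> wh z y > 0"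
        using wh_near[OF z01 True] by blast
      define q where "q = z + min (\<rho>/2) (\<delta> - z)"
      have q: "z < q" "q \<le> \<delta>" unfolding q_def using r zd by auto
      have "Phi q = 0"
      proof (rule propag[OF M z01 z(2), of z q])
        show "\<And>y. z < y \<Longrightarrow> y < q \<Longrightarrow> 0 < wh z y"
          using r unfolding q_def by (intro r(2)) auto
      qed (use q z01 dlt in auto)
      then show False using z(3)[of q] q z01 by auto
    next
      case False
      have z0: "z = 0"
      proof (rule ccontr)
        assume "z \<noteq> 0"
        then have "bh z < W" using z01 zd dlt by (intro bh_lt_W) auto
        then show False using False by simp
      qed
      show False
      proof (cases "\<exists>r0. 0 < r0 \<and> r0 < 1 \<and> w r0 < w 0")
        case True
        then obtain r0 where r0: "0 < r0" "r0 < 1" "w r0 < w 0" by blast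
        have r0d: "0 < r0 * \<delta>" using r0 dpos by simp
        have "Phi \<delta> = 0"
        proof (rule propag[OF M z01 z(2), of "r0 * \<delta>" \<delta>])
          show "\<And>y. r0 * \<delta> < y \<Longrightarrow> y < \<delta> \<Longrightarrow> 0 < wh z y"
            using r0 z0 False dpos r0d by (intro wh_far[OF z01 _ r0]) auto
        qed (use r0 dpos dlt in auto)
        then show False using noint[of \<delta>] d1 by simp
      next
        case False
        then have c: "\<forall>r. 0 \<le> r \<and> r < 1 \<longrightarrow> w r = w 0"
          using w_le0 by (metis linorder_not_le order_antisym_conv order_le_less)
        have "s z > 0" using const_case[OF z01 _ c] \<open>\<not> bh z < W\<close> by simp
        then show False using Phi_zero_s(1)[OF M z01 z(2)] by simp
      qed
    qed
  next
    case False
    then have x0r: "x0 > 1 - \<delta>" using noint[of x0] x0 by force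
    obtain z where z: "z \<in> {1-\<delta>..1}" "Phi z = 0" "\<And>y. y \<in> {1-\<delta>..1} \<Longrightarrow> Phi y = 0 \<Longrightarrow> z \<le> y"
      using Zmin[of "1-\<delta>" 1 x0] x0 x0r dlt by auto
    have zd: "z > 1 - \<delta>" using z noint[of z] d1 by force
    have z01: "0 \<le> z" "z \<le> 1" using z dlt by auto
    show False
    proof (cases "bh z < W")
      case True
      obtain \<rho> where r: "\<rho> > 0" "\<And>y. 0 < \<bar>y - z\<bar> \<Longrightarrow> \<bar>y - z\<bar> < \<rho> \<Longrightarrow> wh z y > 0"
        using wh_near[OF z01 True] by blast
      define p where "p = z - min (\<rho>/2) (z - (1 - \<delta>))"
      have p: "p < z" "1 - \<delta> \<le> p" unfolding p_def using r zd by auto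
      have "Phi p = 0"
      proof (rule propag[OF M z01 z(2), of p z])
        show "\<And>y. p < y \<Longrightarrow> y < z \<Longrightarrow> 0 < wh z y"
          using r unfolding p_def by (intro r(2)) auto
      qed (use p z01 dlt in auto)
      then show False using z(3)[of p] p z01 by auto
    next
      case False
      have z1: "z = 1"
      proof (rule ccontr)
        assume "z \<noteq> 1"
        then have "bh z < W" using z01 zd dlt by (intro bh_lt_W) auto
        then show False using False by simp
      qed
      show False
      proof (cases "\<exists>r0. 0 < r0 \<and> r0 < 1 \<and> w r0 < w 0")
        case True
        then obtain r0 where r0: "0 < r0" "r0 < 1" "w r0 < w 0" by blast
        have r0d: "0 < r0 * \<delta>" using r0 dpos by simp
        have "Phi (1 - \<delta>) = 0"
        proof (rule propag[OF M z01 z(2), of "1 - \<delta>" "1 - r0 * \<delta>"])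
          show "\<And>y. 1 - \<delta> < y \<Longrightarrow> y < 1 - r0 * \<delta> \<Longrightarrow> 0 < wh z y"
            using r0 z1 False dpos r0d by (intro wh_far[OF z01 _ r0]) auto
        qed (use r0 dpos dlt in auto)
        then show False using noint[of "1 - \<delta>"] d1 by simp
      next
        case False
        then have c: "\<forall>r. 0 \<le> r \<and> r < 1 \<longrightarrow> w r = w 0"
          using w_le0 by (metis linorder_not_le order_antisym_conv order_le_less)
        have "s z > 0" using const_case[OF z01 _ c] \<open>\<not> bh z < W\<close> by simp
        then show False using Phi_zero_s(1)[OF M z01 z(2)] by simp
      qed
    qed
  qed
qed

lemma conclusion: "AE x in lebesgue. x \<in> {0<..<1} \<longrightarrow> \<phi> x \<ge> 0"
  using M_AE
proof eventually_elim
  case (elim x)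
  then show ?case using M_zero unfolding v_def by (auto simp: indicator_def)
qed

end

theorem mainTheorem2:
  fixes w :: "real \<Rightarrow> real" and \<delta> :: real and \<phi> :: "real \<Rightarrow> real"
  assumes "A1 w"
    and "0 < \<delta>" and "\<delta> < 1/2"
    and A2: "\<forall>x. 0 < x \<and> x < 1 \<longrightarrow>
               a_delta w \<delta> x \<ge> set_lebesgue_integral lborel {0..1} (\<lambda>y. wt_delta w \<delta> x y)"
    and "L2_Omega \<phi>"
    and "AE x in lebesgue. x \<in> {0<..<1} \<longrightarrow> Pt_delta w \<delta> \<phi> x \<ge> 0"
  shows "AE x in lebesgue. x \<in> {0<..<1} \<longrightarrow> \<phi> x \<ge> 0"
proof -
  interpret mainloc w \<delta> \<phi>
    using assms by unfold_locales auto
  show ?thesis by (rule conclusion)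
qed


end
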